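(* Let $c>0$ and let $\epsilon_1,\dots,\epsilon_n$ be i.i.d. Rademacher variables. Put $L_c(\epsilon)=\max_{0\le j\le n}\big\{\sum_{i=1}^j\epsilon_i-cj\big\}$. Then $$\mathbb E[L_c(\epsilon)]\le 1+\Big(1-\exp\big(-D(\tfrac{c+1}{2}\,\|\,\tfrac12)\big)\Big)^{-2}.$$
   Context: $D(p\|q)=p\log\frac pq+(1-p)\log\frac{1-p}{1-q}$ is the binary Kullback–Leibler divergence, with the convention $D(p\|\frac12)=+\infty$ (so $\exp(-D)=0$) when $p>1$. *)

theory Defs
  imports "HOL-Probability.Probability"
begin

text \<open>Binary Kullback--Leibler divergence D(p||q), natural logarithm.
  Note 0 * ln 0 = 0 in Isabelle, matching the convention 0 log 0 = 0.\<close>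
definition bin_KL :: "real \<Rightarrow> real \<Rightarrow> real" where
  "bin_KL p q = p * ln (p / q) + (1 - p) * ln ((1 - p) / (1 - q))"

text \<open>exp(-D(p||1/2)), with the convention D(p||1/2) = +infinity (so the value is 0) for p > 1.\<close>
definition exp_neg_KL_half :: "real \<Rightarrow> real" where
  "exp_neg_KL_half p = (if p > 1 then 0 else exp (- bin_KL p (1/2)))"

definition rademacher :: "real pmf" where
  "rademacher = map_pmf (\<lambda>b. if b then 1 else -1) (bernoulli_pmf (1/2))"

definition L_c :: "real \<Rightarrow> nat \<Rightarrow> (nat \<Rightarrow> real) \<Rightarrow> real" where
  "L_c c n eps = Max ((\<lambda>j. (\<Sum>i=1..j. eps i) - c * real j) ` {0..n})"

end

theory Submission
  imports Defs
begin

lemma rad_exp: "measure_pmf.expectation rademacher (g::real\<Rightarrow>real) = (g 1 + g (-1)) / 2"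
  unfolding rademacher_def by simp

lemma set_rad: "set_pmf rademacher = {-1, 1}"
  unfolding rademacher_def by auto

lemma fin_P: "finite (set_pmf (Pi_pmf {1..(n::nat)} (0::real) (\<lambda>_. rademacher)))"
  by (subst set_Pi_pmf) (auto simp: set_rad)

lemma supp_P: "eps \<in> set_pmf (Pi_pmf {1..(n::nat)} (0::real) (\<lambda>_. rademacher)) \<Longrightarrow> i \<in> {1..n} \<Longrightarrow> eps i = 1 \<or> eps i = -1"
  by (subst (asm) set_Pi_pmf) (auto simp: set_rad PiE_dflt_def)

lemma mgf:
  fixes l c :: real
  assumes "j \<le> n"
  shows "measure_pmf.expectation (Pi_pmf {1..n} 0 (\<lambda>_. rademacher))
     (\<lambda>eps. exp (l * ((\<Sum>i=1..j. eps i) - c * real j)))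
   = ((exp (l*(1-c)) + exp (l*(-1-c)))/2) ^ j"
proof -
  define f where "f i x = (if i \<le> j then exp (l * (x - c)) else 1)" for i :: nat and x :: real
  have pw: "exp (l * ((\<Sum>i=1..j. eps i) - c * real j)) = (\<Prod>i\<in>{1..n}. f i (eps i))" for eps :: "nat \<Rightarrow> real"
  proof -
    have "l * ((\<Sum>i=1..j. eps i) - c * real j) = (\<Sum>i=1..j. l * (eps i - c))"
      by (simp add: sum_subtractf sum_distrib_left algebra_simps)
    hence "exp (l * ((\<Sum>i=1..j. eps i) - c * real j)) = (\<Prod>i=1..j. exp (l * (eps i - c)))"
      by (simp add: exp_sum)
    also have "\<dots> = (\<Prod>i\<in>{1..n}. f i (eps i))"
      unfolding f_def using assms
      by (subst prod.If_cases) (auto intro!: prod.cong)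
    finally show ?thesis .
  qed
  have "measure_pmf.expectation (Pi_pmf {1..n} 0 (\<lambda>_. rademacher))
     (\<lambda>eps. exp (l * ((\<Sum>i=1..j. eps i) - c * real j)))
     = measure_pmf.expectation (Pi_pmf {1..n} 0 (\<lambda>_. rademacher)) (\<lambda>eps. \<Prod>i\<in>{1..n}. f i (eps i))"
    by (intro Bochner_Integration.integral_cong refl) (rule pw)
  also have "\<dots> = (\<Prod>i\<in>{1..n}. measure_pmf.expectation rademacher (f i))"
    by (rule expectation_prod_Pi_pmf) (auto simp: f_def set_rad intro!: integrable_measure_pmf_finite)
  also have "\<dots> = (\<Prod>i\<in>{1..n}. if i \<le> j then (exp (l*(1-c)) + exp (l*(-1-c)))/2 else 1)"
    by (intro prod.cong) (auto simp: rad_exp f_def algebra_simps)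
  also have "\<dots> = ((exp (l*(1-c)) + exp (l*(-1-c)))/2) ^ j"
  proof -
    have "{1..n} \<inter> {x. x \<le> j} = {1..j}" using assms by auto
    thus ?thesis by (subst prod.If_cases) auto
  qed
  finally show ?thesis .
qed

lemma pw_bound:
  fixes c l :: real and eps :: "nat \<Rightarrow> real"
  assumes c: "c>0" and l: "l>0" and e: "\<And>i. i\<in>{1..n} \<Longrightarrow> eps i \<le> 1"
  shows "L_c c n eps \<le> (\<Sum>k=0..n. \<Sum>j=Suc k..n. exp (l*((\<Sum>i=1..j. eps i) - c*real j)))"
proof -
  define F where "F j = (\<Sum>i=1..j. eps i) - c*real j" for j
  define T where "T k = (\<Sum>j=Suc k..n. exp (l*F j))" for k
  have T0: "T k \<ge> 0" for k unfolding T_def by (intro sum_nonneg) auto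
  have "L_c c n eps \<in> F ` {0..n}" unfolding L_c_def F_def by (intro Max_in) auto
  then obtain m where m: "m \<le> n" "L_c c n eps = F m" by auto
  have RHS: "(\<Sum>k=0..n. \<Sum>j=Suc k..n. exp (l*((\<Sum>i=1..j. eps i) - c*real j))) = (\<Sum>k=0..n. T k)"
    unfolding T_def F_def ..
  show ?thesis
  proof (cases "L_c c n eps \<le> 0")
    case True
    have "0 \<le> (\<Sum>k=0..n. T k)" by (intro sum_nonneg T0)
    then show ?thesis unfolding RHS using True by linarith
  next
    case False
    hence Lpos: "F m > 0" using m by simp
    have "m > 0" using Lpos by (cases m) (auto simp: F_def)
    have "(\<Sum>i=1..m. eps i) \<le> of_nat (card {1..m}) * 1"
      by (rule sum_bounded_above) (use e m in auto)
    moreover have "c * real m > 0" using c \<open>m>0\<close> by simp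
    ultimately have Fm: "F m < real m" by (simp add: F_def)
    define K where "K = nat \<lceil>F m\<rceil>"
    have LK: "F m \<le> real K" unfolding K_def using Lpos by linarith
    have Km: "K \<le> m" unfolding K_def using Fm by linarith
    have Tk: "T k \<ge> 1" if "k < K" for k
    proof -
      have "real k < F m" using that unfolding K_def by linarith
      hence "k < m" using Fm by linarith
      have "exp (l * F m) \<le> T k" unfolding T_def
        by (rule member_le_sum) (use \<open>k<m\<close> m in auto)
      moreover have "1 \<le> exp (l * F m)" using l Lpos by simp
      ultimately show ?thesis by linarith
    qed
    have "real K = (\<Sum>k\<in>{0..<K}. 1)" by simp
    also have "\<dots> \<le> (\<Sum>k\<in>{0..<K}. T k)" by (intro sum_mono Tk) auto
    also have "\<dots> \<le> (\<Sum>k=0..n. T k)" by (intro sum_mono2 T0) (use Km m in auto)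
    finally show ?thesis unfolding RHS using LK m by simp
  qed
qed


lemma geo_bound:
  fixes r :: real
  assumes "0 \<le> r" "r < 1"
  shows "(\<Sum>k=0..n. \<Sum>j=Suc k..n. r^j) \<le> 1/(1-r)^2"
proof -
  have inner: "(\<Sum>j=Suc k..n. r^j) \<le> r^k/(1-r)" for k
  proof -
    have "r^Suc k \<le> r^k" using assms mult_left_le_one_le[of "r^k" r] by simp
    moreover have "0 \<le> r ^ Suc n" "0 \<le> r^k" using assms by auto
    ultimately have "r^Suc k - r^Suc n \<le> r^k" by linarith
    thus ?thesis using assms by (subst sum_gp) (auto intro!: divide_right_mono)
  qed
  have "(\<Sum>k=0..n. \<Sum>j=Suc k..n. r^j) \<le> (\<Sum>k=0..n. r^k/(1-r))" by (intro sum_mono inner)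
  also have "\<dots> = (\<Sum>k=0..n. r^k)/(1-r)" by (simp add: sum_divide_distrib)
  also have "(\<Sum>k=0..n. r^k) = (1 - r^Suc n)/(1-r)" using assms by (subst sum_gp) auto
  also have "\<dots> \<le> 1/(1-r)" using assms by (intro divide_right_mono) auto
  finally show ?thesis using assms by (simp add: power2_eq_square divide_right_mono)
qed

lemma rhs_ge1: "1 \<le> 1 + (x::real) powi (-2)"
  by (simp add: power_int_minus)

theorem lemma6:
  fixes c :: real and n :: nat
  assumes "c > 0"
  shows "measure_pmf.expectation (Pi_pmf {1..n} 0 (\<lambda>_. rademacher)) (L_c c n)
           \<le> 1 + (1 - exp_neg_KL_half ((c + 1) / 2)) powi (-2)"
proof -
  let ?P = "Pi_pmf {1..n} (0::real) (\<lambda>_. rademacher)"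
  have int: "integrable (measure_pmf ?P) f" for f :: "_ \<Rightarrow> real"
    by (rule integrable_measure_pmf_finite[OF fin_P])
  have supp: "\<And>i. i\<in>{1..n} \<Longrightarrow> eps i \<le> 1" if "eps \<in> set_pmf ?P" for eps
    using supp_P[OF that] by force
  show ?thesis
  proof (cases "c \<ge> 1")
    case True
    have "measure_pmf.expectation ?P (L_c c n) \<le> measure_pmf.expectation ?P (\<lambda>_. 0)"
    proof (intro integral_mono_AE int AE_pmfI)
      fix eps assume e: "eps \<in> set_pmf ?P"
      have H: "(\<Sum>i=1..j. eps i) - c * real j \<le> 0" if j: "j \<in> {0..n}" for j
      proof -
        have "(\<Sum>i=1..j. eps i) \<le> of_nat (card {1..j}) * 1"
          by (rule sum_bounded_above) (use supp[OF e] j in auto)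
        moreover have "real j \<le> c * real j" using True by (simp add: mult_le_cancel_right1)
        ultimately show ?thesis by simp
      qed
      show "L_c c n eps \<le> 0" unfolding L_c_def
        by (subst Max_le_iff) (use H in auto)
    qed
    also have "\<dots> = 0" by simp
    finally show ?thesis using rhs_ge1[of "1 - exp_neg_KL_half ((c+1)/2)"] by linarith
  next
    case False
    hence c1: "c < 1" by simp
    define \<alpha> where "\<alpha> = ln (1+c)"
    define \<beta> where "\<beta> = ln (1-c)"
    define l where "l = (\<alpha> - \<beta>)/2"
    define r where "r = (exp (l*(1-c)) + exp (l*(-1-c)))/2"
    have lpos: "l > 0" unfolding l_def \<alpha>_def \<beta>_def using assms c1 by simp
    define M where "M = (\<alpha>+\<beta>)/2"
    have e1: "exp l * exp M = 1 + c"
    proof -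
      have "l + M = \<alpha>" by (simp add: l_def M_def field_simps)
      hence "exp l * exp M = exp \<alpha>" by (simp add: exp_add[symmetric])
      thus ?thesis using assms by (simp add: \<alpha>_def)
    qed
    have e2: "exp (-l) * exp M = 1 - c"
    proof -
      have "-l + M = \<beta>" by (simp add: l_def M_def field_simps)
      hence "exp (-l) * exp M = exp \<beta>" by (simp add: exp_add[symmetric])
      thus ?thesis using c1 by (simp add: \<beta>_def)
    qed
    have "r = exp (-l*c) * ((exp l + exp (-l))/2)"
      unfolding r_def by (simp add: exp_add[symmetric] field_simps)
    also have "(exp l + exp (-l)) = 2 * exp (-M)"
    proof -
      have "(exp l + exp (-l)) * exp M = 2" using e1 e2 by (simp add: distrib_right)
      thus ?thesis by (simp add: exp_minus field_simps)
    qed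
    also have "exp (-l*c) * (2 * exp (-M) / 2) = exp (-((1+c)*\<alpha> + (1-c)*\<beta>)/2)"
      by (simp add: exp_add[symmetric] l_def M_def field_simps)
    finally have r_eq: "r = exp (-((1+c)*\<alpha> + (1-c)*\<beta>)/2)" .
    have q_eq: "exp_neg_KL_half ((c + 1) / 2) = r"
    proof -
      have a: "((c+1)/2) / (1/2) = 1 + c" by simp
      have b: "(1 - (c+1)/2) / (1 - 1/2) = 1 - c" by (simp add: field_simps)
      have d: "1 - (c+1)/2 = (1-c)/2" by (simp add: field_simps)
      have nle: "\<not> (c+1)/2 > 1" using c1 by simp
      have "bin_KL ((c+1)/2) (1/2) = ((1+c)*\<alpha> + (1-c)*\<beta>)/2"
        unfolding bin_KL_def a b unfolding d \<alpha>_def \<beta>_def by (simp add: field_simps)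
      thus ?thesis unfolding exp_neg_KL_half_def r_eq using nle by simp
    qed
    have pos: "(1+c)*\<alpha> + (1-c)*\<beta> > 0"
    proof -
      have x0: "0 < 1/(1+c)" using assms by simp
      have x1: "1/(1+c) \<noteq> 1" using assms by simp
      have le: "ln (1/(1+c)) \<le> 1/(1+c) - 1" by (rule ln_le_minus_one[OF x0])
      have ne: "ln (1/(1+c)) \<noteq> 1/(1+c) - 1" using ln_eq_minus_one[OF x0] x1 by blast
      have "ln (1/(1+c)) < 1/(1+c) - 1" using le ne by linarith
      hence "-\<alpha> < 1/(1+c) - 1" using assms by (simp add: \<alpha>_def ln_div)
      hence "(1+c) * (-\<alpha>) < (1+c) * (1/(1+c) - 1)"
        by (rule mult_strict_left_mono) (use assms in simp)
      moreover have "(1+c) * (1/(1+c) - 1) = -c" using assms by (simp add: field_simps)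
      moreover have "(1+c) * (-\<alpha>) = -((1+c)*\<alpha>)" by simp
      ultimately have A: "(1+c)*\<alpha> > c" by linarith
      have "ln (1/(1-c)) \<le> 1/(1-c) - 1" using c1 by (intro ln_le_minus_one) simp
      hence "-\<beta> \<le> 1/(1-c) - 1" using c1 by (simp add: \<beta>_def ln_div)
      hence "(1-c) * (-\<beta>) \<le> (1-c) * (1/(1-c) - 1)"
        by (rule mult_left_mono) (use c1 in simp)
      moreover have "(1-c) * (1/(1-c) - 1) = c" using c1 by (simp add: field_simps)
      moreover have "(1-c) * (-\<beta>) = -((1-c)*\<beta>)" by simp
      ultimately have B: "(1-c)*\<beta> \<ge> -c" by linarith
      show ?thesis using A B by linarith
    qed
    have r1: "r < 1" unfolding r_eq using pos by simp
    have r0: "r \<ge> 0" unfolding r_eq by simp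
    have "measure_pmf.expectation ?P (L_c c n) \<le> measure_pmf.expectation ?P
        (\<lambda>eps. \<Sum>k=0..n. \<Sum>j=Suc k..n. exp (l*((\<Sum>i=1..j. eps i) - c*real j)))"
      by (intro integral_mono_AE int AE_pmfI pw_bound assms lpos supp) auto
    also have "\<dots> = (\<Sum>k=0..n. \<Sum>j=Suc k..n. measure_pmf.expectation ?P
        (\<lambda>eps. exp (l*((\<Sum>i=1..j. eps i) - c*real j))))"
      by (subst Bochner_Integration.integral_sum[OF int], intro sum.cong refl,
          rule Bochner_Integration.integral_sum[OF int])
    also have "\<dots> = (\<Sum>k=0..n. \<Sum>j=Suc k..n. r^j)"
      unfolding r_def by (intro sum.cong refl mgf) auto
    also have "\<dots> \<le> 1/(1-r)^2" by (rule geo_bound[OF r0 r1])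
    also have "\<dots> \<le> 1 + (1 - exp_neg_KL_half ((c + 1) / 2)) powi (-2)"
      unfolding q_eq by (simp add: power_int_minus divide_inverse)
    finally show ?thesis .
  qed
qed

end
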